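(* Consider the repeated Prisoner's Dilemma with $A_1=A_2=\{C,D\}$. Let $k$ be a natural number, let $k_0$ be the largest integer with $k_0^2+k_0\le k$, and let $k_1,k_2,k_3$ be positive integers with $k_1+k_2+k_3=k_0$. Let $\omega_0=k_1\times(D,D)+k_2\times(D,C)+k_3\times(C,C)$ and \[\omega^*=k^3\times(D,D)+\sum_{n=1}^{k}\big(k\times(C,C)+k\times(D,D)\big)+(k+1)\times(C,C)+\sum_{n=1}^{\infty}\omega_0 .\] Then the complexity of $\omega^*$ with respect to player 1 is $k^3+2k^2+1$, and the complexity of $\omega^*$ with respect to player 2 is $k^3+2k^2+k+1$.
   Context: Action pairs are written (action of player 1, action of player 2). The notation $n\times a$ denotes $n$ consecutive repetitions of the action pair $a$, and $+$ (and $\sum$) denotes concatenation of sequences of action pairs; $\sum_{n=1}^\infty\omega_0$ is the infinite periodic repetition of $\omega_0$. A pure automaton of player $i$ is a finite state machine $(Q,f,g,q^* )$ with output function $f:Q\to A_i$, transition function $g:Q\times A_{3-i}\to Q$ and initial state $q^*$: at stage $t$ in state $q^t$ it plays $f(q^t)$ and moves to $g(q^t,a_{3-i}^t)$, where $a_{3-i}^t$ is the other player's action at stage $t$; its size is $|Q|$. An automaton of player $i$ is compatible with a (finite or infinite) sequence of action pairs $\omega$ if, when player $3-i$ plays her coordinates of $\omega$ stage by stage, the automaton outputs player $i$'s coordinates of $\omega$ at every stage. The complexity of $\omega$ with respect to player $i$ is the size of the smallest automaton of player $i$ compatible with $\omega$. *)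

theory Defs
  imports Main
begin

datatype act = C | D

type_synonym apair = "act \<times> act"

definition pl :: "nat \<Rightarrow> apair \<Rightarrow> act" where
  "pl i a = (if i = 1 then fst a else snd a)"

primrec run :: "(nat \<Rightarrow> act \<Rightarrow> nat) \<Rightarrow> nat \<Rightarrow> (nat \<Rightarrow> act) \<Rightarrow> nat \<Rightarrow> nat" where
  "run g q0 b 0 = q0"
| "run g q0 b (Suc t) = g (run g q0 b t) (b t)"

definition is_automaton :: "nat set \<Rightarrow> (nat \<Rightarrow> act) \<Rightarrow> (nat \<Rightarrow> act \<Rightarrow> nat) \<Rightarrow> nat \<Rightarrow> bool" where
  "is_automaton Q f g q0 \<longleftrightarrow> finite Q \<and> q0 \<in> Q \<and> (\<forall>q\<in>Q. \<forall>a. g q a \<in> Q)"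

definition compatible :: "nat \<Rightarrow> (nat \<Rightarrow> act) \<Rightarrow> (nat \<Rightarrow> act \<Rightarrow> nat) \<Rightarrow> nat \<Rightarrow> (nat \<Rightarrow> apair) \<Rightarrow> bool" where
  "compatible i f g q0 \<omega> \<longleftrightarrow>
     (\<forall>t. f (run g q0 (\<lambda>s. pl (3 - i) (\<omega> s)) t) = pl i (\<omega> t))"

definition complexity :: "nat \<Rightarrow> (nat \<Rightarrow> apair) \<Rightarrow> nat" where
  "complexity i \<omega> = (LEAST n. \<exists>Q f g q0. is_automaton Q f g q0 \<and> card Q = n \<and> compatible i f g q0 \<omega>)"

definition prefix_then_cycle :: "apair list \<Rightarrow> apair list \<Rightarrow> nat \<Rightarrow> apair" where
  "prefix_then_cycle p c t = (if t < length p then p ! t else c ! ((t - length p) mod length c))"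

definition omega0 :: "nat \<Rightarrow> nat \<Rightarrow> nat \<Rightarrow> apair list" where
  "omega0 k1 k2 k3 = replicate k1 (D,D) @ replicate k2 (D,C) @ replicate k3 (C,C)"

definition omega_star_prefix :: "nat \<Rightarrow> apair list" where
  "omega_star_prefix k = replicate (k^3) (D,D)
     @ concat (replicate k (replicate k (C,C) @ replicate k (D,D)))
     @ replicate (k+1) (C,C)"

definition omega_star :: "nat \<Rightarrow> nat \<Rightarrow> nat \<Rightarrow> nat \<Rightarrow> nat \<Rightarrow> apair" where
  "omega_star k k1 k2 k3 = prefix_then_cycle (omega_star_prefix k) (omega0 k1 k2 k3)"

end

theory Submission imports Defs begin


definition Wp :: "nat \<Rightarrow> nat \<Rightarrow> apair" where
 "Wp k t = (if t < k^3 then (D,D) else if t < k^3 + 2*k*k then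
     (if (t - k^3) mod (2*k) < k then (C,C) else (D,D)) else (C,C))"

definition Oc :: "nat \<Rightarrow> nat \<Rightarrow> nat \<Rightarrow> apair" where
 "Oc k1 k2 i = (if i < k1 then (D,D) else if i < k1+k2 then (D,C) else (C,C))"

lemma concat_rep_nth:
  "i < n * length xs \<Longrightarrow> concat (replicate n xs) ! i = xs ! (i mod length xs)"
proof (induction n arbitrary: i)
  case 0 then show ?case by simp
next
  case (Suc n)
  show ?case
  proof (cases "i < length xs")
    case True then show ?thesis by (simp add: nth_append)
  next
    case False
    then have "i - length xs < n * length xs" using Suc.prems by simp
    then show ?thesis using False Suc.IH[of "i - length xs"]
      by (simp add: nth_append le_mod_geq)
  qed
qed

lemma prefix_len: "length (omega_star_prefix k) = k^3 + 2*k*k + k + 1"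
  by (simp add: omega_star_prefix_def length_concat sum_list_replicate)

lemma prefix_nth: "t < k^3 + 2*k*k + k + 1 \<Longrightarrow> omega_star_prefix k ! t = Wp k t"
proof -
  assume t: "t < k^3 + 2*k*k + k + 1"
  let ?xs = "replicate k (C,C) @ replicate k (D,D)"
  have l: "length (concat (replicate k ?xs)) = 2*k*k"
    by (simp add: length_concat sum_list_replicate)
  show ?thesis
  proof (cases "t < k^3")
    case True then show ?thesis by (simp add: omega_star_prefix_def nth_append Wp_def)
  next
    case f1: False
    show ?thesis
    proof (cases "t < k^3 + 2*k*k")
      case True
      have lx: "length ?xs = 2*k" by simp
      have "t - k^3 < k * length ?xs" using True f1 by (simp add: lx algebra_simps)
      from concat_rep_nth[OF this] have "concat (replicate k ?xs) ! (t - k^3) = ?xs ! ((t - k^3) mod (2*k))"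
        by (simp only: lx)
      moreover have "(t - k^3) mod (2*k) < 2*k" using True f1
        by (metis less_nat_zero_code mod_less_divisor mult_is_0 neq0_conv add_0_right le_add_diff_inverse nat_less_le)
      ultimately show ?thesis using True f1 l
        by (simp add: omega_star_prefix_def nth_append Wp_def)
    next
      case False
      have a: "\<not> t - k^3 < 2*k*k" using False f1 by linarith
      have b: "t - (k^3 + 2*k*k) < Suc k" using t by linarith
      have "replicate (Suc k) (C,C) ! (t - (k^3 + 2*k*k)) = (C,C)" using b by (simp del: replicate_Suc)
      then show ?thesis using t f1 l a False by (simp add: omega_star_prefix_def nth_append Wp_def del: replicate_Suc)
    qed
  qed
qed

lemma omega0_nth: "i < k1+k2+k3 \<Longrightarrow> omega0 k1 k2 k3 ! i = Oc k1 k2 i"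
  by (auto simp: omega0_def nth_append Oc_def)

lemma omega0_len: "length (omega0 k1 k2 k3) = k1+k2+k3"
  by (simp add: omega0_def)

lemma omega_eq: "k1+k2+k3 > 0 \<Longrightarrow> omega_star k k1 k2 k3 t =
   (if t < k^3 + 2*k*k + k + 1 then Wp k t else Oc k1 k2 ((t - (k^3 + 2*k*k + k + 1)) mod (k1+k2+k3)))"
  unfolding omega_star_def prefix_then_cycle_def prefix_len omega0_len
  by (auto simp: prefix_nth omega0_nth)



definition distg :: "nat \<Rightarrow> (nat \<Rightarrow> apair) \<Rightarrow> nat \<Rightarrow> nat \<Rightarrow> bool" where
  "distg i w s t \<longleftrightarrow> (\<exists>j. (\<forall>l<j. pl (3-i) (w (s+l)) = pl (3-i) (w (t+l))) \<and> pl i (w (s+j)) \<noteq> pl i (w (t+j)))"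

lemma run_shift: "run g q0 b s = run g q0 b t \<Longrightarrow> \<forall>l'<l. b (s+l') = b (t+l') \<Longrightarrow>
    run g q0 b (s+l) = run g q0 b (t+l)"
  by (induction l) auto

lemma run_in: "is_automaton Q f g q0 \<Longrightarrow> run g q0 b t \<in> Q"
  by (induction t) (auto simp: is_automaton_def)

lemma lower:
  assumes A: "is_automaton Q f g q0" and Cm: "compatible i f g q0 w"
    and Dg: "\<forall>s t. s < t \<longrightarrow> t < N \<longrightarrow> distg i w s t"
  shows "N \<le> card Q"
proof -
  define b where "b = (\<lambda>s. pl (3 - i) (w s))"
  have ne: "run g q0 b s \<noteq> run g q0 b t" if "s < t" "t < N" for s t
  proof
    assume eq: "run g q0 b s = run g q0 b t"
    from Dg that obtain j where j1: "\<forall>l<j. b (s+l) = b (t+l)"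
      and j2: "pl i (w (s+j)) \<noteq> pl i (w (t+j))" unfolding distg_def b_def by blast
    have "run g q0 b (s+j) = run g q0 b (t+j)" using run_shift[OF eq] j1 by blast
    then have "f (run g q0 b (s+j)) = f (run g q0 b (t+j))" by simp
    with Cm j2 show False unfolding compatible_def b_def by metis
  qed
  have "inj_on (run g q0 b) {..<N}"
    unfolding inj_on_def by (metis lessThan_iff linorder_neqE_nat ne)
  moreover have "run g q0 b ` {..<N} \<subseteq> Q" using run_in[OF A] by blast
  moreover have "finite Q" using A by (simp add: is_automaton_def)
  ultimately show ?thesis using card_inj_on_le by fastforce
qed

lemma run_eq: "\<sigma> 0 = q0 \<Longrightarrow> (\<And>t. \<sigma> (Suc t) = g (\<sigma> t) (b t)) \<Longrightarrow> run g q0 b t = \<sigma> t"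
  by (induction t) auto

lemma complexity_eq:
  assumes "is_automaton Q0 f0 g0 q00" "card Q0 = N" "compatible i f0 g0 q00 w"
    and "\<And>Q f g q0. is_automaton Q f g q0 \<Longrightarrow> compatible i f g q0 w \<Longrightarrow> N \<le> card Q"
  shows "complexity i w = N"
  unfolding complexity_def
  by (rule Least_equality) (use assms in blast)+

lemma diag_dist:
  assumes "\<forall>l<j. w (s+l) = w (t+l)" "w (s+j) \<noteq> w (t+j)"
    "fst (w (s+j)) = snd (w (s+j))" "fst (w (t+j)) = snd (w (t+j))" "i = 1 \<or> i = 2"
  shows "distg i w s t"
  unfolding distg_def
proof (rule exI[of _ j], intro conjI allI impI)
  fix l assume "l < j" then show "pl (3 - i) (w (s + l)) = pl (3 - i) (w (t + l))" using assms(1) by simp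
next
  show "pl i (w (s + j)) \<noteq> pl i (w (t + j))" using assms(2-5)
    by (cases "w (s+j)"; cases "w (t+j)") (auto simp: pl_def)
qed



lemma Wp_blk: assumes "q < k" "j < 2*k"
  shows "Wp k (k^3 + (2*k*q + j)) = (if j < k then (C,C) else (D,D))"
proof -
  have "2*k*(q+1) \<le> 2*k*k" using assms(1) by (intro mult_le_mono2) simp
  then have "2*k*q + j < 2*k*k" using assms(2) by (simp add: algebra_simps)
  moreover have "(2*k*q + j) mod (2*k) = j" using assms(2) by simp
  ultimately show ?thesis by (simp add: Wp_def)
qed

lemma Wp_diag: "fst (Wp k t) = snd (Wp k t)"
  by (simp add: Wp_def)

context
  fixes k k1 k2 k3 :: nat
  assumes k1: "k1 > 0" and k2: "k2 > 0" and k3: "k3 > 0" and kk: "k1+k2+k3 < k"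
begin

abbreviation "FF \<equiv> k^3 + 2*k*k"
abbreviation "PP \<equiv> k^3 + 2*k*k + k + 1"
abbreviation "w \<equiv> omega_star k k1 k2 k3"

lemma w_pre: "t < PP \<Longrightarrow> w t = Wp k t"
  using omega_eq[of k1 k2 k3 k t] k1 by simp

lemma w_cyc: "\<not> t < PP \<Longrightarrow> w t = Oc k1 k2 ((t - PP) mod (k1+k2+k3))"
  using omega_eq[of k1 k2 k3 k t] k1 by simp

lemma W1: "j < k \<Longrightarrow> Wp k (k^3 + j) = (C,C)"
  using Wp_blk[of 0 k j] by simp

lemma W2: "j < k \<Longrightarrow> Wp k (k^3 + k + j) = (D,D)"
  using Wp_blk[of 0 k "k+j"] by (simp add: add.assoc)

lemma Wtail: "FF \<le> t \<Longrightarrow> Wp k t = (C,C)"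
  by (simp add: Wp_def)

lemma W3: "i < k1 \<Longrightarrow> Wp k (FF - k1 + i) = (D,D)"
proof -
  assume i: "i < k1"
  have kk': "k*k = k*(k-1) + k" using kk by (cases k) auto
  have e: "FF - k1 + i = k^3 + (2*k*(k-1) + (2*k - k1 + i))" using kk i kk' by simp
  show ?thesis unfolding e using kk i by (subst Wp_blk) auto
qed

lemma uniq: assumes "p < FF" shows "\<exists>m\<le>k. Wp k (p+m) = (D,D)"
proof (cases "p < k^3")
  case True then show ?thesis by (intro exI[of _ 0]) (simp add: Wp_def)
next
  case False
  define u where "u = p - k^3"
  define q where "q = u div (2*k)"
  define v where "v = u mod (2*k)"
  have pu: "p = k^3 + u" using False u_def by simp
  have uq: "u = 2*k*q + v" unfolding q_def v_def by simp
  have "u < k * (2*k)" using assms pu by (simp add: algebra_simps)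
  then have q: "q < k" unfolding q_def by (rule less_mult_imp_div_less)
  have v: "v < 2*k" unfolding v_def using kk by simp
  show ?thesis
  proof (cases "v < k")
    case True
    have "Wp k (p + (k - v)) = (D,D)"
      using Wp_blk[OF q, of k] True kk by (simp add: pu uq add.assoc)
    then show ?thesis using True by (intro exI[of _ "k-v"]) simp
  next
    case False
    then show ?thesis using Wp_blk[OF q v] by (intro exI[of _ 0]) (simp add: pu uq)
  qed
qed

lemma prefix_dist:
  assumes st: "s < t" "t \<le> FF" and i: "i = 1 \<or> i = 2"
  shows "distg i w s t"
proof -
  have ex: "\<exists>l. t + l < PP \<and> Wp k (s+l) \<noteq> Wp k (t+l)"
  proof -
    have "s + (FF - t) < FF" using st by simp
    then obtain m where m: "m \<le> k" "Wp k (s + (FF - t) + m) = (D,D)"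
      using uniq[of "s + (FF - t)"] by blast
    have "Wp k (t + (FF - t + m)) = (C,C)" using st by (intro Wtail) simp
    then show ?thesis using m st by (intro exI[of _ "FF - t + m"]) (simp add: add.assoc)
  qed
  obtain l where l: "t + l < PP \<and> Wp k (s+l) \<noteq> Wp k (t+l)"
    and lm: "\<forall>l'<l. \<not> (t + l' < PP \<and> Wp k (s+l') \<noteq> Wp k (t+l'))"
    using exists_least_iff[THEN iffD1, OF ex] by blast
  show ?thesis
  proof (rule diag_dist[of l])
    show "\<forall>la<l. w (s + la) = w (t + la)" using lm l st by (auto simp: w_pre)
    show "w (s + l) \<noteq> w (t + l)" using l st by (simp add: w_pre)
  qed (use l st i in \<open>simp_all add: w_pre Wp_diag\<close>)
qed


lemma late_dist:
  assumes st: "s < t" "t < PP" "FF < t"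
  shows "distg 2 w s t"
proof -
  define r where "r = PP - t"
  have r: "1 \<le> r" "r \<le> k" "t + r = PP" using st unfolding r_def by auto
  have wt: "\<And>l. l < r \<Longrightarrow> w (t+l) = (C,C)" using st r by (simp add: w_pre Wtail)
  have wP: "w PP = (D,D)" using w_cyc[of PP] k1 by (simp add: Oc_def)
  show ?thesis
  proof (cases "\<exists>l<r. Wp k (s+l) \<noteq> (C,C)")
    case True
    then obtain l where l: "l < r \<and> Wp k (s+l) \<noteq> (C,C)"
      and lm: "\<forall>l'<l. \<not> (l' < r \<and> Wp k (s+l') \<noteq> (C,C))"
      using exists_least_iff[THEN iffD1, OF True] by blast
    show ?thesis
    proof (rule diag_dist[of l])
      show "\<forall>la<l. w (s + la) = w (t + la)" using lm l st wt r by (auto simp: w_pre)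
      show "w (s + l) \<noteq> w (t + l)" using l st wt r by (simp add: w_pre)
    qed (use l st r wt in \<open>simp_all add: w_pre Wp_diag\<close>)
  next
    case False
    then have allC: "\<And>l. l < r \<Longrightarrow> Wp k (s+l) = (C,C)" by blast
    have eqb: "\<forall>l<r. w (s+l) = w (t+l)" using allC wt st r by (simp add: w_pre)
    show ?thesis
    proof (cases "FF \<le> s")
      case True
      have "w (s+r) = (C,C)" using True st r by (simp add: w_pre Wtail)
      then show ?thesis using eqb wP r by (intro diag_dist[of r]) auto
    next
      case notF: False
      have s3: "\<not> s < k^3" using allC[of 0] r by (auto simp: Wp_def)
      define u where "u = s - k^3"
      define q where "q = u div (2*k)"
      define v where "v = u mod (2*k)"
      have pu: "s = k^3 + u" using s3 u_def by simp
      have uq: "u = 2*k*q + v" unfolding q_def v_def by simp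
      have "u < k * (2*k)" using notF pu by (simp add: algebra_simps)
      then have q: "q < k" unfolding q_def by (rule less_mult_imp_div_less)
      have v: "v < 2*k" unfolding v_def using kk by simp
      have sl: "\<And>l. s + l = k^3 + (2*k*q + (v + l))" using pu uq by simp
      have bnd: "\<And>j. v + j < 2*k \<Longrightarrow> s + j < FF"
      proof -
        fix j :: nat assume j: "v + j < 2*k"
        have "2*k*(q+1) \<le> 2*k*k" using q by (intro mult_le_mono2) simp
        then show "s + j < FF" using j pu uq by (simp add: algebra_simps)
      qed
      have vk: "v < k" using allC[of 0] r Wp_blk[OF q v] by (simp add: pu uq split: if_splits)
      show ?thesis
      proof (cases "v + r < k")
        case True
        have "w (s+r) = Wp k (s+r)" using st r by (intro w_pre) simp
        also have "\<dots> = (C,C)" using Wp_blk[OF q, of "v+r"] True kk by (simp add: sl)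
        finally have "w (s+r) = (C,C)" .
        then show ?thesis using eqb wP r by (intro diag_dist[of r]) auto
      next
        case False
        have vr: "v + r = k"
        proof (rule ccontr)
          assume "v + r \<noteq> k"
          then have "k - v < r" using False r(1) by arith
          moreover have "Wp k (s + (k - v)) = (D,D)" using Wp_blk[OF q, of k] vk kk by (simp add: sl)
          ultimately show False using allC by fastforce
        qed
        show ?thesis unfolding distg_def
        proof (rule exI[of _ "r + k1"], intro conjI allI impI)
          fix l assume l: "l < r + k1"
          show "pl (3 - 2) (w (s + l)) = pl (3 - 2) (w (t + l))"
          proof (cases "l < r")
            case True then show ?thesis using eqb by simp
          next
            case False
            have "s + l < FF" using bnd[of "l"] l vr kk by simp
            then have "w (s+l) = Wp k (s+l)" by (intro w_pre) simp
            also have "\<dots> = (D,D)" using Wp_blk[OF q, of "v+l"] False l vr kk by (simp add: sl)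
            finally have ws: "w (s+l) = (D,D)" .
            have "t + l - PP = l - r" using r by simp
            moreover have "l - r < k1+k2+k3" using l False by simp
            ultimately have wt2: "w (t+l) = (D,D)" using w_cyc[of "t+l"] r False l
              by (simp add: Oc_def)
            show ?thesis using ws wt2 by (simp add: pl_def)
          qed
        next
          have "s + (r+k1) < FF" using bnd[of "r+k1"] vr kk by simp
          then have "w (s+(r+k1)) = Wp k (s+(r+k1))" by (intro w_pre) simp
          also have "\<dots> = (D,D)" using Wp_blk[OF q, of "v+(r+k1)"] vr kk by (simp add: sl)
          finally have ws: "w (s+(r+k1)) = (D,D)" .
          have "t + (r+k1) - PP = k1" using r by simp
          then have wt2: "w (t+(r+k1)) = (D,C)" using w_cyc[of "t+(r+k1)"] r k2
            by (simp add: Oc_def)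
          show "pl 2 (w (s + (r + k1))) \<noteq> pl 2 (w (t + (r + k1)))" using ws wt2 by (simp add: pl_def)
        qed
      qed
    qed
  qed
qed


definition "f1 = (\<lambda>q. fst (Wp k q))"
definition "g1 = (\<lambda>q a. if a = f1 q then (if q = FF then k^3 else Suc q)
   else if k^3+k+k1 \<le> q \<and> q < k^3+k+k1+k2 then (if Suc q = k^3+k+k1+k2 then k^3+k-k3 else Suc q) else 0)"
definition "c1 = (\<lambda>i. if i < k1+k2 then k^3+k+i else k^3+k+i-(k1+k2+k3))"
definition "\<sigma>1 = (\<lambda>t. if t < PP then (if t \<le> FF then t else k^3 + (t - Suc FF)) else c1 ((t - PP) mod (k1+k2+k3)))"

lemma kpos: "k \<ge> 1" using kk by simp

lemma FF_ge: "k^3 + 2*k \<le> FF"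
proof -
  have "2*k*1 \<le> 2*k*k" using kpos by (intro mult_le_mono2) auto
  then show ?thesis by simp
qed

lemma kk2: "2*k \<le> 2*k*k"
  using mult_le_mono2[of 1 k "2*k"] kpos by simp

lemma kk3: "k^3 + k + k1 + k2 < FF" "k^3 + k < FF"
  using kk2 kk by linarith+

lemma aut1: "is_automaton {..<Suc FF} f1 g1 0"
  unfolding is_automaton_def g1_def using FF_ge kk kk3 by auto

lemma card1: "card {..<Suc FF} = k^3 + 2*k^2 + 1"
  by (simp add: power2_eq_square)

lemma step1: "\<sigma>1 (Suc t) = g1 (\<sigma>1 t) (snd (w t)) \<and> f1 (\<sigma>1 t) = fst (w t)"
proof (cases "Suc t < PP")
  case True
  show ?thesis
  proof (cases "t < FF")
    case True then show ?thesis using FF_ge kpos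
      by (simp add: \<sigma>1_def g1_def f1_def w_pre Wp_diag)
  next
    case f: False
    show ?thesis
    proof (cases "t = FF")
      case True then show ?thesis using kpos
        by (simp add: \<sigma>1_def g1_def f1_def w_pre Wtail W1)
    next
      case False
      then have j: "t - Suc FF < k" "Suc t - Suc FF < k" using f True by auto
      have "k^3 + (t - Suc FF) \<noteq> FF" using j FF_ge by auto
      then show ?thesis using j f False True W1[of "t - Suc FF"] W1[of "Suc t - Suc FF"]
        by (simp add: \<sigma>1_def g1_def f1_def w_pre Wtail Suc_diff_le)
    qed
  qed
next
  case notP: False
  show ?thesis
  proof (cases "t < PP")
    case True
    then have t: "t = FF + k" using notP by simp
    then show ?thesis using W1[of "k - 1"] kpos FF_ge k1 k2 kk3
      by (simp add: \<sigma>1_def g1_def f1_def w_pre Wtail c1_def)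
  next
    case False
    define i where "i = (t - PP) mod (k1+k2+k3)"
    have i: "i < k1+k2+k3" unfolding i_def using k1 by simp
    have wt: "w t = Oc k1 k2 i" using w_cyc False i_def by simp
    have st: "\<sigma>1 t = c1 i" using False by (simp add: \<sigma>1_def i_def)
    have sst: "\<sigma>1 (Suc t) = c1 (if Suc i = k1+k2+k3 then 0 else Suc i)"
    proof -
      have "Suc t - PP = Suc (t - PP)" using False by simp
      then have "(Suc t - PP) mod (k1+k2+k3) = (if Suc i = k1+k2+k3 then 0 else Suc i)"
        unfolding i_def by (simp add: mod_Suc)
      then show ?thesis using False unfolding \<sigma>1_def by simp
    qed
    show ?thesis
    proof (cases "i < k1")
      case True
      then show ?thesis using st sst wt W2[of i] W2[of "Suc i"] kk k2 k3 FF_ge kk3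
        by (auto simp: g1_def f1_def c1_def Oc_def)
    next
      case f1': False
      show ?thesis
      proof (cases "i < k1+k2")
        case True
        then show ?thesis using st sst wt W2[of i] f1' kk k3 FF_ge kk3
          by (auto simp: g1_def f1_def c1_def Oc_def)
      next
        case False
        have e: "k^3+k+i-(k1+k2+k3) = k^3 + (k+i-(k1+k2+k3))" using i kk by simp
        have e2: "k^3+k+Suc i-(k1+k2+k3) = k^3 + (k+Suc i-(k1+k2+k3))" using i kk by simp
        have a: "Wp k (k^3+k+i-(k1+k2+k3)) = (C,C)" unfolding e using i kk by (intro W1) simp
        have "k^3+k+i-(k1+k2+k3) \<noteq> FF" using i kk kk3 by linarith
        then show ?thesis using st sst wt a False i kk e e2 k1 k2 k3
          by (auto simp: g1_def f1_def c1_def Oc_def)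
      qed
    qed
  qed
qed

lemma compat1: "compatible 1 f1 g1 0 w"
proof -
  have r: "run g1 0 (\<lambda>s. pl (3 - 1) (w s)) t = \<sigma>1 t" for t
  proof (rule run_eq)
    show "\<sigma>1 0 = 0" using kpos by (simp add: \<sigma>1_def)
  qed (simp add: pl_def step1[THEN conjunct1])
  show ?thesis unfolding compatible_def r using step1 by (simp add: pl_def)
qed


definition "f2 = (\<lambda>q. snd (Wp k q))"
definition "g2 = (\<lambda>q a. if a = f2 q then (if Suc q = PP then FF - k1 else Suc q)
   else if FF \<le> q \<and> q < FF + k2 then (if Suc q = FF + k2 then PP - k3 else Suc q) else 0)"
definition "c2 = (\<lambda>i. if i < k1 then FF - k1 + i else if i < k1+k2 then FF + i - k1 else PP + i - (k1+k2+k3))"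
definition "\<sigma>2 = (\<lambda>t. if t < PP then t else c2 ((t - PP) mod (k1+k2+k3)))"

lemma aut2: "is_automaton {..<PP} f2 g2 0"
  unfolding is_automaton_def g2_def using kk k3 by auto

lemma card2: "card {..<PP} = k^3 + 2*k^2 + k + 1"
  by (simp add: power2_eq_square)

lemma step2: "\<sigma>2 (Suc t) = g2 (\<sigma>2 t) (fst (w t)) \<and> f2 (\<sigma>2 t) = snd (w t)"
proof (cases "Suc t < PP")
  case True
  then show ?thesis by (simp add: \<sigma>2_def g2_def f2_def w_pre Wp_diag)
next
  case notP: False
  show ?thesis
  proof (cases "t < PP")
    case True
    then have t: "t = FF + k" using notP by simp
    then show ?thesis using k1 kk
      by (simp add: \<sigma>2_def g2_def f2_def w_pre Wtail c2_def)
  next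
    case False
    define i where "i = (t - PP) mod (k1+k2+k3)"
    have i: "i < k1+k2+k3" unfolding i_def using k1 by simp
    have wt: "w t = Oc k1 k2 i" using w_cyc False i_def by simp
    have st: "\<sigma>2 t = c2 i" using False by (simp add: \<sigma>2_def i_def)
    have sst: "\<sigma>2 (Suc t) = c2 (if Suc i = k1+k2+k3 then 0 else Suc i)"
    proof -
      have "Suc t - PP = Suc (t - PP)" using False by simp
      then have "(Suc t - PP) mod (k1+k2+k3) = (if Suc i = k1+k2+k3 then 0 else Suc i)"
        unfolding i_def by (simp add: mod_Suc)
      then show ?thesis using False unfolding \<sigma>2_def by simp
    qed
    have k1F: "k1 \<le> FF" using kk kk3 by linarith
    show ?thesis
    proof (cases "i < k1")
      case True
      have a: "Wp k (FF - k1 + i) = (D,D)" using W3 True by simp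
      have lt: "FF - k1 + i < FF" using True k1F by linarith
      have c: "c2 i = FF - k1 + i" using True by (simp add: c2_def)
      have c': "c2 (Suc i) = Suc (FF - k1 + i)" using True k1F k2 by (simp add: c2_def; arith)
      have ni: "Suc i \<noteq> k1+k2+k3" using True k2 by simp
      have o: "Oc k1 k2 i = (D,D)" using True by (simp add: Oc_def)
      have g: "g2 (FF - k1 + i) D = Suc (FF - k1 + i)" using a lt by (simp add: g2_def f2_def)
      show ?thesis using st sst wt c c' ni o g a by (simp add: f2_def)
    next
      case f1': False
      show ?thesis
      proof (cases "i < k1+k2")
        case True
        have a: "Wp k (FF + i - k1) = (C,C)" using f1' by (intro Wtail) simp
        have c: "c2 i = FF + i - k1" using True f1' by (simp add: c2_def)
        have o: "Oc k1 k2 i = (D,C)" using True f1' by (simp add: Oc_def)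
        have ni: "Suc i \<noteq> k1+k2+k3" using True k3 by simp
        have rng: "FF \<le> FF + i - k1 \<and> FF + i - k1 < FF + k2" using True f1' by arith
        have c': "c2 (Suc i) = (if Suc (FF + i - k1) = FF + k2 then PP - k3 else Suc (FF + i - k1))"
          using True f1' by (simp add: c2_def; arith)
        have g: "g2 (FF + i - k1) D = c2 (Suc i)" using a rng c' by (simp add: g2_def f2_def)
        show ?thesis using st sst wt c ni o g a by (simp add: f2_def)
      next
        case False
        have a: "Wp k (PP + i - (k1+k2+k3)) = (C,C)" using i kk by (intro Wtail) simp
        have c: "c2 i = PP + i - (k1+k2+k3)" using False by (simp add: c2_def)
        have o: "Oc k1 k2 i = (C,C)" using False by (simp add: Oc_def)
        have g: "g2 (PP + i - (k1+k2+k3)) C = (if Suc i = k1+k2+k3 then c2 0 else c2 (Suc i))"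
        proof (cases "Suc i = k1+k2+k3")
          case True
          have e: "Suc (PP + i - (k1+k2+k3)) = PP" using True by simp
          show ?thesis using a e True k1 by (simp add: g2_def f2_def c2_def)
        next
          case ne: False
          have e: "Suc (PP + i - (k1+k2+k3)) = PP + Suc i - (k1+k2+k3)" using i kk by simp
          have e2: "PP + Suc i - (k1+k2+k3) \<noteq> PP" using i ne by simp
          have c3: "c2 (Suc i) = PP + Suc i - (k1+k2+k3)" using False by (simp add: c2_def)
          show ?thesis using a e e2 ne c3 by (simp add: g2_def f2_def)
        qed
        show ?thesis using st sst wt c o g a by (simp add: f2_def)
      qed
    qed
  qed
qed

lemma compat2: "compatible 2 f2 g2 0 w"
proof -
  have r: "run g2 0 (\<lambda>s. pl (3 - 2) (w s)) t = \<sigma>2 t" for t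
  proof (rule run_eq)
    show "\<sigma>2 0 = 0" by (simp add: \<sigma>2_def)
  qed (simp add: pl_def step2[THEN conjunct1])
  show ?thesis unfolding compatible_def r using step2 by (simp add: pl_def)
qed

lemma main: "complexity 1 w = k^3 + 2*k^2 + 1 \<and> complexity 2 w = k^3 + 2*k^2 + k + 1"
proof
  show "complexity 1 w = k^3 + 2*k^2 + 1"
  proof (rule complexity_eq[OF aut1 card1 compat1])
    fix Q f g q0 assume "is_automaton Q f g q0" "compatible 1 f g q0 w"
    moreover have "\<forall>s t. s < t \<longrightarrow> t < k^3 + 2*k^2 + 1 \<longrightarrow> distg 1 w s t"
      using prefix_dist by (simp add: power2_eq_square)
    ultimately show "k^3 + 2*k^2 + 1 \<le> card Q" by (rule lower)
  qed
  show "complexity 2 w = k^3 + 2*k^2 + k + 1"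
  proof (rule complexity_eq[OF aut2 card2 compat2])
    fix Q f g q0 assume "is_automaton Q f g q0" "compatible 2 f g q0 w"
    moreover have "\<forall>s t. s < t \<longrightarrow> t < k^3 + 2*k^2 + k + 1 \<longrightarrow> distg 2 w s t"
    proof (intro allI impI)
      fix s t :: nat assume "s < t" "t < k^3 + 2*k^2 + k + 1"
      then show "distg 2 w s t" using prefix_dist[of s t 2] late_dist[of s t]
        by (cases "t \<le> FF") (auto simp: power2_eq_square)
    qed
    ultimately show "k^3 + 2*k^2 + k + 1 \<le> card Q" by (rule lower)
  qed
qed

end

theorem lemma1:
  fixes k k1 k2 k3 :: nat
  assumes "k1 > 0" and "k2 > 0" and "k3 > 0"
    and "k1 + k2 + k3 = (GREATEST m::nat. m^2 + m \<le> k)"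
  shows "complexity 1 (omega_star k k1 k2 k3) = k^3 + 2*k^2 + 1
       \<and> complexity 2 (omega_star k k1 k2 k3) = k^3 + 2*k^2 + k + 1"
proof -
  let ?g = "GREATEST m::nat. m^2 + m \<le> k"
  have "?g^2 + ?g \<le> k"
    by (rule GreatestI_nat[of "\<lambda>m. m^2 + m \<le> k" 0 k]) auto
  moreover have "?g \<ge> 1" using assms by simp
  ultimately have "?g < k"
  proof -
    fix G :: nat assume h: "G^2 + G \<le> k" "G \<ge> 1"
    have "1 * G \<le> G * G" using h(2) by (intro mult_le_mono) auto
    then have "G \<le> G * G" by simp
    then show "G < k" using h unfolding power2_eq_square by linarith
  qed
  then have "k1+k2+k3 < k" using assms(4) by simp
  then show ?thesis using main[OF assms(1-3)] by blast
qed


end
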